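(* Let $0\le\beta<1$ and $\gamma=\frac34+\frac14\beta$, and let $C>0$. There exist constants $c>0$ and $N$ such that for all $n\ge N$, all integers $0\le k\le Cn^{\beta}$, and every multiset $\mathcal{C}$ of $n-k$ unlabelled graphs on $n-1$ vertices, there is a set $J\subseteq\{0,\dots,n-1\}$ with $|J|\ge n-cn^{\gamma}$ such that for any two graphs $G,H$ on $n$ vertices whose decks both contain $\mathcal{C}$ as a sub-multiset, $d_t(G)=d_t(H)$ for every $t\in J$. (That is, from any $n-k$ cards of a graph of order $n$, the number $d_t$ of vertices of degree $t$ can be determined exactly for all but $O(n^\gamma)$ values of $t$.)
   Context: All graphs are finite, simple and undirected. For a graph $G'$ and integer $t$, $d_t(G')$ is the number of vertices of degree $t$ in $G'$. For $v\in V(G)$, the card $G-v$ is obtained by deleting $v$ and its incident edges; the deck $\mathcal{D}(G)$ is the multiset of the $n$ cards $G-v$, $v\in V(G)$, up to isomorphism. *)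

theory Defs
  imports Complex_Main "HOL-Library.Multiset"
begin

definition is_graph :: "nat \<Rightarrow> nat set set \<Rightarrow> bool" where
  "is_graph n E \<longleftrightarrow> (\<forall>e\<in>E. e \<subseteq> {0..<n} \<and> card e = 2)"

definition graph_iso :: "nat \<Rightarrow> nat set set \<Rightarrow> nat set set \<Rightarrow> bool" where
  "graph_iso n E F \<longleftrightarrow> (\<exists>f. bij_betw f {0..<n} {0..<n} \<and> F = (\<lambda>e. f ` e) ` E)"

text \<open>Isomorphism class of a graph of order n (an unlabelled graph).\<close>
definition iso_class :: "nat \<Rightarrow> nat set set \<Rightarrow> nat set set set" where
  "iso_class n E = {F. is_graph n F \<and> graph_iso n E F}"

text \<open>The card G - v, relabelled onto {0..<n-1}.\<close>
definition card_del :: "nat set set \<Rightarrow> nat \<Rightarrow> nat set set" where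
  "card_del E v = (\<lambda>e. (\<lambda>u. if u < v then u else u - 1) ` e) ` {e\<in>E. v \<notin> e}"

definition deck :: "nat \<Rightarrow> nat set set \<Rightarrow> nat set set set multiset" where
  "deck n E = image_mset (\<lambda>v. iso_class (n - 1) (card_del E v)) (mset_set {0..<n})"

definition degree :: "nat set set \<Rightarrow> nat \<Rightarrow> nat" where
  "degree E v = card {e\<in>E. v \<in> e}"

definition deg_count :: "nat \<Rightarrow> nat set set \<Rightarrow> nat \<Rightarrow> nat" where
  "deg_count n E t = card {v\<in>{0..<n}. degree E v = t}"

end

theory Submission
  imports Defs
begin

lemma card_image_sets:
  assumes "inj_on g A" "\<forall>e\<in>E. e \<subseteq> A"
  shows "card ((\<lambda>e. g ` e) ` E) = card E"
proof -
  have "inj_on (\<lambda>e. g ` e) E"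
  proof (rule inj_onI)
    fix x y assume "x \<in> E" "y \<in> E" "g ` x = g ` y"
    thus "x = y" using inj_on_image_eq_iff[OF assms(1)] assms(2) by blast
  qed
  thus ?thesis by (rule card_image)
qed

lemma image_sets_mem:
  assumes "inj_on g A" "\<forall>e\<in>E. e \<subseteq> A" "w \<in> A"
  shows "{e' \<in> (\<lambda>e. g ` e) ` E. g w \<in> e'} = (\<lambda>e. g ` e) ` {e\<in>E. w \<in> e}"
proof
  show "{e' \<in> (\<lambda>e. g ` e) ` E. g w \<in> e'} \<subseteq> (\<lambda>e. g ` e) ` {e\<in>E. w \<in> e}"
  proof
    fix e' assume "e' \<in> {e' \<in> (\<lambda>e. g ` e) ` E. g w \<in> e'}"
    then obtain e where e: "e \<in> E" "e' = g ` e" "g w \<in> g ` e" by auto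
    have "w \<in> e" using e inj_on_image_mem_iff[OF assms(1) assms(3)] assms(2) by auto
    thus "e' \<in> (\<lambda>e. g ` e) ` {e\<in>E. w \<in> e}" using e by auto
  qed
qed auto

lemma degree_image:
  assumes "inj_on g A" "\<forall>e\<in>E. e \<subseteq> A" "w \<in> A"
  shows "degree ((\<lambda>e. g ` e) ` E) (g w) = degree E w"
proof -
  have "degree ((\<lambda>e. g ` e) ` E) (g w) = card ((\<lambda>e. g ` e) ` {e\<in>E. w \<in> e})"
    unfolding degree_def using image_sets_mem[OF assms] by simp
  also have "\<dots> = degree E w"
    unfolding degree_def by (rule card_image_sets[OF assms(1)]) (use assms(2) in auto)
  finally show ?thesis .
qed

lemma deg_count_iso:
  assumes "is_graph p F" "graph_iso p F F'"
  shows "deg_count p F' t = deg_count p F t"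
proof -
  obtain f where f: "bij_betw f {0..<p} {0..<p}" and F': "F' = (\<lambda>e. f ` e) ` F"
    using assms(2) graph_iso_def by auto
  have sub: "\<forall>e\<in>F. e \<subseteq> {0..<p}" using assms(1) is_graph_def by auto
  have inj: "inj_on f {0..<p}" using f bij_betw_def by auto
  have "{x\<in>{0..<p}. degree F' x = t} = f ` {w\<in>{0..<p}. degree F w = t}"
  proof
    show "{x \<in> {0..<p}. degree F' x = t} \<subseteq> f ` {w \<in> {0..<p}. degree F w = t}"
    proof
      fix x assume x: "x \<in> {x \<in> {0..<p}. degree F' x = t}"
      then obtain w where w: "w \<in> {0..<p}" "x = f w" using f bij_betw_def
        by (metis (no_types, lifting) imageE mem_Collect_eq)
      have "degree F' x = degree F w" using degree_image[OF inj sub w(1)] F' w by simp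
      thus "x \<in> f ` {w \<in> {0..<p}. degree F w = t}" using x w by auto
    qed
  next
    show "f ` {w \<in> {0..<p}. degree F w = t} \<subseteq> {x \<in> {0..<p}. degree F' x = t}"
    proof
      fix x assume "x \<in> f ` {w \<in> {0..<p}. degree F w = t}"
      then obtain w where w: "w \<in> {0..<p}" "degree F w = t" "x = f w" by auto
      have "degree F' x = degree F w" using degree_image[OF inj sub w(1)] F' w by simp
      moreover have "x \<in> {0..<p}" using w bij_betw_apply[OF f] by auto
      ultimately show "x \<in> {x \<in> {0..<p}. degree F' x = t}" using w by auto
    qed
  qed
  hence "deg_count p F' t = card (f ` {w\<in>{0..<p}. degree F w = t})" unfolding deg_count_def by simp
  also have "\<dots> = deg_count p F t" unfolding deg_count_def
    by (rule card_image) (rule inj_on_subset[OF inj], auto)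
  finally show ?thesis .
qed

lemma graph_iso_refl: "graph_iso p F F"
  unfolding graph_iso_def by (rule exI[of _ id]) auto

definition phi :: "nat \<Rightarrow> nat \<Rightarrow> nat set set set \<Rightarrow> nat" where
  "phi p t X = deg_count p (SOME F. F \<in> X) t"

lemma phi_iso_class:
  assumes "is_graph p F"
  shows "phi p t (iso_class p F) = deg_count p F t"
proof -
  have "F \<in> iso_class p F" using assms graph_iso_refl unfolding iso_class_def by auto
  hence "(SOME F'. F' \<in> iso_class p F) \<in> iso_class p F" by (rule someI)
  hence "graph_iso p F (SOME F'. F' \<in> iso_class p F)" unfolding iso_class_def by auto
  thus ?thesis unfolding phi_def using deg_count_iso[OF assms] by simp
qed

definition sg :: "nat \<Rightarrow> nat \<Rightarrow> nat" where "sg v u = (if u < v then u else u - 1)"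

lemma card_del_alt: "card_del E v = (\<lambda>e. sg v ` e) ` {e\<in>E. v \<notin> e}"
  unfolding card_del_def sg_def by simp

lemma sg_inj: "inj_on (sg v) (UNIV - {v})"
  unfolding inj_on_def sg_def by auto

lemma sg_bij:
  assumes "v < n"
  shows "bij_betw (sg v) ({0..<n} - {v}) {0..<n-1}"
proof (rule bij_betw_imageI)
  show "inj_on (sg v) ({0..<n} - {v})" by (rule inj_on_subset[OF sg_inj]) auto
  show "sg v ` ({0..<n} - {v}) = {0..<n - 1}"
  proof
    show "sg v ` ({0..<n} - {v}) \<subseteq> {0..<n - 1}" using assms by (auto simp: sg_def)
  next
    show "{0..<n - 1} \<subseteq> sg v ` ({0..<n} - {v})"
    proof
      fix x assume x: "x \<in> {0..<n - 1}"
      show "x \<in> sg v ` ({0..<n} - {v})"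
      proof (cases "x < v")
        case True thus ?thesis using x assms by (intro image_eqI[of _ _ x]) (auto simp: sg_def)
      next
        case False thus ?thesis using x assms by (intro image_eqI[of _ _ "x+1"]) (auto simp: sg_def)
      qed
    qed
  qed
qed

lemma graph_finite: "is_graph n G \<Longrightarrow> finite G"
  unfolding is_graph_def by (meson Pow_iff finite_Pow_iff finite_atLeastLessThan finite_subset subsetI)

lemma card_del_graph:
  assumes "is_graph n G" "v < n"
  shows "is_graph (n-1) (card_del G v)"
  unfolding is_graph_def card_del_alt
proof
  fix e' assume "e' \<in> (\<lambda>e. sg v ` e) ` {e \<in> G. v \<notin> e}"
  then obtain e where e: "e \<in> G" "v \<notin> e" "e' = sg v ` e" by auto
  have es: "e \<subseteq> {0..<n} - {v}" using e assms(1) is_graph_def by auto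
  have "e' \<subseteq> {0..<n-1}" using e(3) es bij_betw_imp_surj_on[OF sg_bij[OF assms(2)]] by auto
  moreover have "card e' = 2" using e es assms(1) is_graph_def
    card_image[OF inj_on_subset[OF sg_inj[of v], of e]] by auto
  ultimately show "e' \<subseteq> {0..<n - 1} \<and> card e' = 2" by auto
qed

lemma edges_through_two:
  assumes "is_graph n G" "u \<noteq> v"
  shows "{e\<in>G. u \<in> e \<and> v \<in> e} = (if {u,v} \<in> G then {{u,v}} else {})"
proof -
  have "e = {u,v}" if "e \<in> G" "u \<in> e" "v \<in> e" for e
  proof -
    have "card e = 2" using that assms is_graph_def by auto
    then obtain x y where "e = {x,y}" "x \<noteq> y" by (auto simp: card_2_iff)
    thus ?thesis using that assms(2) by auto
  qed
  note h = this
  show ?thesis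
  proof (cases "{u,v} \<in> G")
    case True
    have "{e\<in>G. u \<in> e \<and> v \<in> e} = {{u,v}}"
    proof (intro equalityI subsetI)
      fix x assume "x \<in> {e\<in>G. u \<in> e \<and> v \<in> e}" thus "x \<in> {{u,v}}" using h by simp
    next
      fix x assume "x \<in> {{u,v}}" thus "x \<in> {e\<in>G. u \<in> e \<and> v \<in> e}" using True by simp
    qed
    thus ?thesis using True by simp
  next
    case False
    have "{e\<in>G. u \<in> e \<and> v \<in> e} = {}" using h False by force
    thus ?thesis using False by simp
  qed
qed

lemma degree_card_del:
  assumes "is_graph n G" "v < n" "u < n" "u \<noteq> v"
  shows "degree (card_del G v) (sg v u) = degree G u - (if {u,v} \<in> G then 1 else 0)"
proof -
  have sub: "\<forall>e\<in>{e\<in>G. v \<notin> e}. e \<subseteq> UNIV - {v}" by auto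
  have "degree (card_del G v) (sg v u) = degree {e\<in>G. v \<notin> e} u"
    unfolding card_del_alt by (rule degree_image[OF sg_inj sub]) (use assms in auto)
  also have "\<dots> = card {e\<in>G. v \<notin> e \<and> u \<in> e}" unfolding degree_def by (rule arg_cong[where f=card]) auto
  finally have 1: "degree (card_del G v) (sg v u) = card {e\<in>G. v \<notin> e \<and> u \<in> e}" .
  have fin: "finite G" using graph_finite assms(1) by auto
  have "{e\<in>G. u \<in> e} = {e\<in>G. v \<notin> e \<and> u \<in> e} \<union> {e\<in>G. u \<in> e \<and> v \<in> e}" by auto
  hence "degree G u = card {e\<in>G. v \<notin> e \<and> u \<in> e} + card {e\<in>G. u \<in> e \<and> v \<in> e}"
    unfolding degree_def by (subst card_Un_disjoint[symmetric]) (use fin in auto)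
  also have "card {e\<in>G. u \<in> e \<and> v \<in> e} = (if {u,v} \<in> G then 1 else 0)"
    using edges_through_two[OF assms(1,4)] by simp
  finally show ?thesis using 1 by simp
qed

definition cnt :: "nat \<Rightarrow> nat set set \<Rightarrow> nat \<Rightarrow> nat \<Rightarrow> nat" where
  "cnt n G v t = card {u\<in>{0..<n}-{v}. degree G u - (if {u,v}\<in>G then 1 else 0) = t}"

lemma deg_count_card_del:
  assumes "is_graph n G" "v < n"
  shows "deg_count (n-1) (card_del G v) t = cnt n G v t"
proof -
  have bij: "bij_betw (sg v) ({0..<n} - {v}) {0..<n-1}" by (rule sg_bij[OF assms(2)])
  have "{x\<in>{0..<n-1}. degree (card_del G v) x = t} =
        sg v ` {u\<in>{0..<n}-{v}. degree G u - (if {u,v}\<in>G then 1 else 0) = t}"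
  proof
    show "{x\<in>{0..<n-1}. degree (card_del G v) x = t} \<subseteq>
        sg v ` {u\<in>{0..<n}-{v}. degree G u - (if {u,v}\<in>G then 1 else 0) = t}"
    proof
      fix x assume x: "x \<in> {x\<in>{0..<n-1}. degree (card_del G v) x = t}"
      then obtain u where u: "u \<in> {0..<n}-{v}" "x = sg v u"
        using bij_betw_imp_surj_on[OF bij] by (metis (no_types, lifting) imageE mem_Collect_eq)
      show "x \<in> sg v ` {u\<in>{0..<n}-{v}. degree G u - (if {u,v}\<in>G then 1 else 0) = t}"
        using x u degree_card_del[OF assms, of u] by auto
    qed
  next
    show "sg v ` {u\<in>{0..<n}-{v}. degree G u - (if {u,v}\<in>G then 1 else 0) = t} \<subseteq>
          {x\<in>{0..<n-1}. degree (card_del G v) x = t}"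
      using degree_card_del[OF assms] bij_betw_imp_surj_on[OF bij] by auto
  qed
  hence "deg_count (n-1) (card_del G v) t =
     card (sg v ` {u\<in>{0..<n}-{v}. degree G u - (if {u,v}\<in>G then 1 else 0) = t})"
    unfolding deg_count_def by simp
  also have "\<dots> = cnt n G v t" unfolding cnt_def
    by (rule card_image, rule inj_on_subset[OF sg_inj]) auto
  finally show ?thesis .
qed

definition nb :: "nat set set \<Rightarrow> nat \<Rightarrow> nat \<Rightarrow> nat set" where
  "nb G n u = {v\<in>{0..<n}. {u,v} \<in> G}"

lemma nb_card:
  assumes "is_graph n G" "u < n"
  shows "card (nb G n u) = degree G u"
proof -
  have "bij_betw (\<lambda>v. {u,v}) (nb G n u) {e\<in>G. u \<in> e}"
  proof (rule bij_betw_imageI)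
    show "inj_on (\<lambda>v. {u, v}) (nb G n u)" unfolding inj_on_def by (auto simp: doubleton_eq_iff)
    show "(\<lambda>v. {u, v}) ` nb G n u = {e \<in> G. u \<in> e}"
    proof
      show "(\<lambda>v. {u, v}) ` nb G n u \<subseteq> {e \<in> G. u \<in> e}" unfolding nb_def by auto
      show "{e \<in> G. u \<in> e} \<subseteq> (\<lambda>v. {u, v}) ` nb G n u"
      proof
        fix e assume e: "e \<in> {e \<in> G. u \<in> e}"
        hence "card e = 2" "e \<subseteq> {0..<n}" using assms is_graph_def by auto
        then obtain x y where xy: "e = {x,y}" "x \<noteq> y" by (auto simp: card_2_iff)
        obtain w where w: "e = {u,w}" using xy e by auto
        have "w \<in> nb G n u" unfolding nb_def using w e \<open>e \<subseteq> {0..<n}\<close> by auto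
        thus "e \<in> (\<lambda>v. {u, v}) ` nb G n u" using w by auto
      qed
    qed
  qed
  thus ?thesis unfolding degree_def by (simp add: bij_betw_same_card)
qed

lemma nb_sub:
  assumes "is_graph n G"
  shows "nb G n u \<subseteq> {0..<n} - {u}"
proof -
  have "{u,u} \<notin> G" using assms unfolding is_graph_def by auto
  thus ?thesis unfolding nb_def by auto
qed

lemma degree_le:
  assumes "is_graph n G" "u < n"
  shows "degree G u \<le> n - 1"
proof -
  have "card (nb G n u) \<le> card ({0..<n} - {u})" by (rule card_mono) (use nb_sub[OF assms(1)] in auto)
  thus ?thesis using nb_card[OF assms] assms(2) by simp
qed

lemma sum_if_const:
  assumes "finite A"
  shows "(\<Sum>u\<in>A. if Q u then (c::nat) else 0) = c * card {u\<in>A. Q u}"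
proof -
  have "(\<Sum>u\<in>A. if Q u then c else 0) = (\<Sum>u\<in>{u\<in>A. Q u}. c)"
    using sum.inter_filter[OF assms, of "\<lambda>_. c" Q] by simp
  thus ?thesis by simp
qed

lemma cnt_row:
  assumes "is_graph n G" "u < n"
  shows "card {v\<in>{0..<n}. v \<noteq> u \<and> degree G u - (if {u,v}\<in>G then 1 else 0) = t}
       = (if degree G u = t then n - 1 - t else 0) + (if degree G u = t + 1 then t + 1 else 0)"
proof -
  let ?S = "{v\<in>{0..<n}. v \<noteq> u \<and> degree G u - (if {u,v}\<in>G then 1 else 0) = t}"
  have ns: "nb G n u \<subseteq> {0..<n} - {u}" by (rule nb_sub[OF assms(1)])
  have nc: "card (nb G n u) = degree G u" by (rule nb_card[OF assms])
  show ?thesis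
  proof (cases "degree G u = t")
    case True
    have "?S = ({0..<n} - {u}) - nb G n u"
    proof -
      have dpos: "degree G u \<ge> 1" if "v < n" "{u,v} \<in> G" for v
      proof -
        have "v \<in> nb G n u" using that unfolding nb_def by auto
        moreover have "finite (nb G n u)" unfolding nb_def by auto
        ultimately have "card (nb G n u) > 0" using card_gt_0_iff by blast
        thus ?thesis using nc by simp
      qed
      show ?thesis using True unfolding nb_def
        apply (auto split: if_splits)
        using dpos by fastforce+
    qed
    hence "card ?S = (n - 1) - t" using True nc ns assms(2)
      by (simp add: card_Diff_subset finite_subset)
    thus ?thesis using True by simp
  next
    case False
    show ?thesis
    proof (cases "degree G u = t + 1")
      case True
      have "?S = nb G n u" using True ns unfolding nb_def by (auto split: if_splits)
      thus ?thesis using True nc by simp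
    next
      case False2: False
      have "?S = {}" using False False2 by (auto split: if_splits)
      thus ?thesis using False False2 by simp
    qed
  qed
qed

lemma kelly:
  assumes "is_graph n G"
  shows "(\<Sum>v<n. cnt n G v t) = (n - 1 - t) * deg_count n G t + (t + 1) * deg_count n G (t + 1)"
proof -
  let ?P = "\<lambda>u v. degree G u - (if {u,v}\<in>G then 1 else 0) = t"
  have "(\<Sum>v<n. cnt n G v t) = (\<Sum>v\<in>{0..<n}. \<Sum>u\<in>{0..<n}. if u \<noteq> v \<and> ?P u v then 1 else 0)"
    unfolding cnt_def by (rule sum.cong) (auto simp: sum_if_const lessThan_atLeast0 intro!: arg_cong[where f=card])
  also have "\<dots> = (\<Sum>u\<in>{0..<n}. \<Sum>v\<in>{0..<n}. if u \<noteq> v \<and> ?P u v then 1 else 0)"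
    by (rule sum.swap)
  also have "\<dots> = (\<Sum>u\<in>{0..<n}. (if degree G u = t then n - 1 - t else 0) + (if degree G u = t + 1 then t + 1 else 0))"
  proof (rule sum.cong[OF refl])
    fix u assume u: "u \<in> {0..<n}"
    have "(\<Sum>v\<in>{0..<n}. if u \<noteq> v \<and> ?P u v then 1 else 0) =
          card {v\<in>{0..<n}. v \<noteq> u \<and> ?P u v}"
      by (subst sum_if_const) (auto intro!: arg_cong[where f=card])
    also have "\<dots> = (if degree G u = t then n - 1 - t else 0) + (if degree G u = t + 1 then t + 1 else 0)"
      by (rule cnt_row[OF assms]) (use u in auto)
    finally show "(\<Sum>v\<in>{0..<n}. if u \<noteq> v \<and> ?P u v then 1 else 0) = \<dots>" .
  qed
  also have "\<dots> = (n - 1 - t) * deg_count n G t + (t + 1) * deg_count n G (t + 1)"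
    unfolding sum.distrib deg_count_def by (simp add: sum_if_const)
  finally show ?thesis .
qed

lemma cnt_le:
  assumes "is_graph n G"
  shows "cnt n G v t \<le> deg_count n G t + deg_count n G (t + 1)"
proof -
  have "{u\<in>{0..<n}-{v}. degree G u - (if {u,v}\<in>G then 1 else 0) = t} \<subseteq>
        {u\<in>{0..<n}. degree G u = t} \<union> {u\<in>{0..<n}. degree G u = t + 1}"
    by (auto split: if_splits)
  hence "cnt n G v t \<le> card ({u\<in>{0..<n}. degree G u = t} \<union> {u\<in>{0..<n}. degree G u = t + 1})"
    unfolding cnt_def by (intro card_mono) auto
  also have "\<dots> \<le> deg_count n G t + deg_count n G (t + 1)"
    unfolding deg_count_def by (rule card_Un_le)
  finally show ?thesis .
qed

lemma deg_le_cnt: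
  assumes "is_graph n G" "v < n"
  shows "deg_count n G t \<le> 1 + cnt n G v t + cnt n G v (t - 1)"
proof -
  have "{u\<in>{0..<n}. degree G u = t} \<subseteq> {v} \<union>
        {u\<in>{0..<n}-{v}. degree G u - (if {u,v}\<in>G then 1 else 0) = t} \<union>
        {u\<in>{0..<n}-{v}. degree G u - (if {u,v}\<in>G then 1 else 0) = t - 1}"
    by (auto split: if_splits)
  hence "deg_count n G t \<le> card ({v} \<union>
        {u\<in>{0..<n}-{v}. degree G u - (if {u,v}\<in>G then 1 else 0) = t} \<union>
        {u\<in>{0..<n}-{v}. degree G u - (if {u,v}\<in>G then 1 else 0) = t - 1})"
    unfolding deg_count_def by (intro card_mono) auto
  also have "\<dots> \<le> 1 + cnt n G v t + cnt n G v (t - 1)"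
    unfolding cnt_def
    using card_Un_le[of "{v} \<union> {u\<in>{0..<n}-{v}. degree G u - (if {u,v}\<in>G then 1 else 0) = t}"
        "{u\<in>{0..<n}-{v}. degree G u - (if {u,v}\<in>G then 1 else 0) = t - 1}"]
      card_Un_le[of "{v}" "{u\<in>{0..<n}-{v}. degree G u - (if {u,v}\<in>G then 1 else 0) = t}"]
    by simp
  finally show ?thesis .
qed

lemma deck_mem:
  assumes "x \<in># deck n G"
  shows "\<exists>v<n. x = iso_class (n-1) (card_del G v)"
  using assms unfolding deck_def by auto

lemma phi_deck:
  assumes "is_graph n G" "v < n"
  shows "phi (n-1) t (iso_class (n-1) (card_del G v)) = cnt n G v t"
  using phi_iso_class[OF card_del_graph[OF assms]] deg_count_card_del[OF assms] by simp

lemma deck_sum: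
  assumes "is_graph n G"
  shows "sum_mset (image_mset (phi (n-1) t) (deck n G)) = (\<Sum>v<n. cnt n G v t)"
proof -
  have "sum_mset (image_mset (phi (n-1) t) (deck n G)) =
        (\<Sum>v\<in>{0..<n}. phi (n-1) t (iso_class (n-1) (card_del G v)))"
    unfolding deck_def by (simp add: image_mset.compositionality sum_unfold_sum_mset o_def)
  also have "\<dots> = (\<Sum>v\<in>{0..<n}. cnt n G v t)" by (rule sum.cong) (use phi_deck[OF assms] in auto)
  finally show ?thesis by (simp add: lessThan_atLeast0)
qed

lemma sum_mset_bound:
  fixes f :: "'a \<Rightarrow> nat"
  assumes "\<forall>x\<in>#P. f x \<le> b"
  shows "sum_mset (image_mset f P) \<le> size P * b"
  using assms
proof (induction P)
  case empty thus ?case by simp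
next
  case (add x P) thus ?case by simp
qed

lemma main_identity:
  assumes G: "is_graph n G" and sub: "image_mset (iso_class (n - 1)) C \<subseteq># deck n G" and t: "t < n"
  shows "\<bar>real (sum_mset (image_mset (phi (n-1) t) (image_mset (iso_class (n - 1)) C)))
          - ((real (size C) - 1 - real t) * real (deg_count n G t) + (real t + 1) * real (deg_count n G (t+1)))\<bar>
         \<le> (real n - real (size C)) * (real (deg_count n G t) + real (deg_count n G (t+1)))"
proof -
  let ?I = "image_mset (iso_class (n - 1)) C"
  let ?P = "deck n G - ?I"
  let ?f = "phi (n-1) t"
  define s where "s = sum_mset (image_mset ?f ?I)"
  define p where "p = sum_mset (image_mset ?f ?P)"
  define a where "a = deg_count n G t"
  define b where "b = deg_count n G (t+1)"
  have dk: "deck n G = ?I + ?P" using sub by (simp add: subset_mset.add_diff_inverse)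
  have sd: "size (deck n G) = n" unfolding deck_def by simp
  have sP: "size ?P = n - size C" using sub sd by (simp add: size_Diff_submset)
  have mn: "size C \<le> n" using size_mset_mono[OF sub] sd by simp
  have "sum_mset (image_mset ?f (deck n G)) = s + p"
    unfolding s_def p_def by (subst dk) simp
  hence eq: "s + p = (n - 1 - t) * a + (t + 1) * b"
    using deck_sum[OF G, of t] kelly[OF G, of t] unfolding a_def b_def by simp
  have "\<forall>x\<in>#?P. ?f x \<le> a + b"
  proof
    fix x assume "x \<in># ?P"
    hence "x \<in># deck n G" by (rule in_diffD)
    then obtain v where v: "v < n" "x = iso_class (n-1) (card_del G v)" using deck_mem by blast
    show "?f x \<le> a + b" using v phi_deck[OF G v(1)] cnt_le[OF G] unfolding a_def b_def by simp
  qed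
  note bd = this
  have pb: "p \<le> (n - size C) * (a + b)" unfolding p_def using sum_mset_bound[OF bd] sP by simp
  have eqr: "real s + real p = (real n - 1 - real t) * real a + (real t + 1) * real b"
  proof -
    have r1: "real (n - 1 - t) = real n - 1 - real t" using t by (simp add: of_nat_diff)
    have "real (s + p) = real ((n - 1 - t) * a + (t + 1) * b)" using eq by simp
    thus ?thesis unfolding of_nat_add of_nat_mult r1 by simp
  qed
  have pbr: "real p \<le> (real n - real (size C)) * (real a + real b)"
  proof -
    have "real p \<le> real ((n - size C) * (a + b))" using pb by (simp only: of_nat_le_iff)
    thus ?thesis using mn by (simp only: of_nat_mult of_nat_add of_nat_diff)
  qed
  have "\<bar>real s - ((real (size C) - 1 - real t) * real a + (real t + 1) * real b)\<bar>
        \<le> (real n - real (size C)) * (real a + real b)"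
  proof -
    have e: "real s - ((real (size C) - 1 - real t) * real a + (real t + 1) * real b)
          = (real n - real (size C)) * real a - real p" using eqr by (simp only: left_diff_distrib right_diff_distrib distrib_left distrib_right)
    have "real p \<ge> 0" by simp
    moreover have "(real n - real (size C)) * real a \<ge> 0" using mn by simp
    moreover have "(real n - real (size C)) * real b \<ge> 0" using mn by simp
    moreover have "(real n - real (size C)) * (real a + real b) =
        (real n - real (size C)) * real a + (real n - real (size C)) * real b" by (simp add: distrib_left)
    ultimately show ?thesis unfolding e using pbr by (simp only: abs_le_iff) linarith
  qed
  from this[unfolded s_def a_def b_def] show ?thesis .
qed

lemma h_bound:
  assumes G: "is_graph n G" and sub: "image_mset (iso_class (n - 1)) C \<subseteq># deck n G"
    and F0: "F0 \<in># C" "is_graph (n-1) F0"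
  shows "deg_count n G t \<le> 1 + deg_count (n-1) F0 t + deg_count (n-1) F0 (t - 1)"
proof -
  have "iso_class (n-1) F0 \<in># image_mset (iso_class (n - 1)) C" using F0(1) by simp
  hence "iso_class (n-1) F0 \<in># deck n G" by (rule mset_subset_eqD[OF sub])
  then obtain v where v: "v < n" "iso_class (n-1) F0 = iso_class (n-1) (card_del G v)" using deck_mem by blast
  have e: "deg_count (n-1) F0 s = cnt n G v s" for s
    using phi_iso_class[OF F0(2), of s] phi_deck[OF G v(1), of s] v(2) by metis
  show ?thesis using deg_le_cnt[OF G v(1), of t] e[of t] e[of "t-1"] by linarith
qed

function Bf :: "(nat \<Rightarrow> real) \<Rightarrow> (nat \<Rightarrow> real) \<Rightarrow> real \<Rightarrow> nat \<Rightarrow> nat \<Rightarrow> real" where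
  "Bf e q A T t = (if t < T then e t + q t * Bf e q A T (Suc t) else A)"
  by auto
termination by (relation "measure (\<lambda>(e,q,A,T,t). T - t)") auto

declare Bf.simps[simp del]

lemma Bf_lt: "t < T \<Longrightarrow> Bf e q A T t = e t + q t * Bf e q A T (Suc t)"
  by (subst Bf.simps) simp

lemma Bf_ge: "\<not> t < T \<Longrightarrow> Bf e q A T t = A"
  by (subst Bf.simps) simp

lemma Bf_nonneg:
  assumes "\<And>t. e t \<ge> 0" "\<And>t. q t \<ge> 0" "A \<ge> 0"
  shows "Bf e q A T t \<ge> 0"
proof (induction "T - t" arbitrary: t)
  case 0 thus ?case using Bf_ge[of t T] assms by simp
next
  case (Suc d)
  hence "t < T" "d = T - Suc t" by auto
  hence "Bf e q A T (Suc t) \<ge> 0" using Suc by simp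
  thus ?case using Bf_lt[OF \<open>t < T\<close>] assms by simp
qed

lemma Bf_dom:
  fixes D :: "nat \<Rightarrow> real"
  assumes "\<And>t. e t \<ge> 0" "\<And>t. q t \<ge> 0"
    and rec: "\<And>t. t < T \<Longrightarrow> \<bar>D t\<bar> \<le> e t + q t * \<bar>D (Suc t)\<bar>" and top: "\<bar>D T\<bar> \<le> A"
  shows "t \<le> T \<Longrightarrow> \<bar>D t\<bar> \<le> Bf e q A T t"
proof (induction "T - t" arbitrary: t)
  case 0 thus ?case using Bf_ge[of t T] top by simp
next
  case (Suc d)
  hence tT: "t < T" and "d = T - Suc t" by auto
  hence ih: "\<bar>D (Suc t)\<bar> \<le> Bf e q A T (Suc t)" using Suc by simp
  have "\<bar>D t\<bar> \<le> e t + q t * \<bar>D (Suc t)\<bar>" by (rule rec[OF tT])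
  also have "\<dots> \<le> e t + q t * Bf e q A T (Suc t)" using ih assms(2)[of t] by (simp add: mult_left_mono)
  finally show ?case using Bf_lt[OF tT] by simp
qed

lemma Bf_sum:
  assumes "\<And>t. e t \<ge> 0" "\<And>t. q t \<ge> 0" "A \<ge> 0" and q1: "\<And>t. t < T \<Longrightarrow> q t \<le> 1"
  shows "t \<le> T \<Longrightarrow> Bf e q A T t \<le> (\<Sum>s\<in>{t..<T}. e s) + A"
proof (induction "T - t" arbitrary: t)
  case 0 thus ?case using Bf_ge[of t T] by simp
next
  case (Suc d)
  hence tT: "t < T" and "d = T - Suc t" by auto
  hence ih: "Bf e q A T (Suc t) \<le> (\<Sum>s\<in>{Suc t..<T}. e s) + A" using Suc by simp
  have nn: "Bf e q A T (Suc t) \<ge> 0" by (rule Bf_nonneg[OF assms(1-3)])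
  have "q t * Bf e q A T (Suc t) \<le> Bf e q A T (Suc t)"
    using q1[OF tT] nn by (simp add: mult_left_le_one_le assms(2))
  hence "Bf e q A T t \<le> e t + ((\<Sum>s\<in>{Suc t..<T}. e s) + A)" using Bf_lt[OF tT] ih by simp
  also have "\<dots> = (\<Sum>s\<in>{t..<T}. e s) + A" using tT by (simp add: sum.atLeast_Suc_lessThan)
  finally show ?case .
qed

lemma Bf_decay:
  assumes "\<And>t. e t \<ge> 0" "\<And>t. q t \<ge> 0" "A \<ge> 0" and qq: "0 \<le> qq" "qq \<le> 1"
    and qP: "\<And>t. t < P \<Longrightarrow> q t \<le> qq" and PT: "P \<le> T"
  shows "t \<le> P \<Longrightarrow> Bf e q A T t \<le> (\<Sum>s\<in>{t..<P}. e s) + qq ^ (P - t) * Bf e q A T P"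
proof (induction "P - t" arbitrary: t)
  case 0 thus ?case by simp
next
  case (Suc d)
  hence tP: "t < P" and "d = P - Suc t" by auto
  hence ih: "Bf e q A T (Suc t) \<le> (\<Sum>s\<in>{Suc t..<P}. e s) + qq ^ (P - Suc t) * Bf e q A T P"
    using Suc by simp
  have tT: "t < T" using tP PT by simp
  have nn: "Bf e q A T (Suc t) \<ge> 0" by (rule Bf_nonneg[OF assms(1-3)])
  have nP: "Bf e q A T P \<ge> 0" by (rule Bf_nonneg[OF assms(1-3)])
  have sn: "(\<Sum>s\<in>{Suc t..<P}. e s) \<ge> 0" using assms(1) by (simp add: sum_nonneg)
  have "q t * Bf e q A T (Suc t) \<le> qq * Bf e q A T (Suc t)"
    using qP[OF tP] nn by (simp add: mult_right_mono)
  also have "\<dots> \<le> qq * ((\<Sum>s\<in>{Suc t..<P}. e s) + qq ^ (P - Suc t) * Bf e q A T P)"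
    using ih qq by (simp add: mult_left_mono)
  also have "\<dots> = qq * (\<Sum>s\<in>{Suc t..<P}. e s) + qq ^ (P - t) * Bf e q A T P"
  proof -
    have "P - t = Suc (P - Suc t)" using tP by simp
    thus ?thesis by (simp add: algebra_simps)
  qed
  also have "\<dots> \<le> (\<Sum>s\<in>{Suc t..<P}. e s) + qq ^ (P - t) * Bf e q A T P"
    using qq sn by (simp add: mult_left_le_one_le)
  finally have "Bf e q A T t \<le> e t + ((\<Sum>s\<in>{Suc t..<P}. e s) + qq ^ (P - t) * Bf e q A T P)"
    using Bf_lt[OF tT] by simp
  also have "\<dots> = (\<Sum>s\<in>{t..<P}. e s) + qq ^ (P - t) * Bf e q A T P"
    using tP by (simp add: sum.atLeast_Suc_lessThan)
  finally show ?case .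
qed

lemma Bf_total:
  assumes "\<And>t. e t \<ge> 0" "\<And>t. q t \<ge> 0" "A \<ge> 0" and qq: "qq < 1" and q0: "0 \<le> qq"
    and qL: "\<And>t. t < L \<Longrightarrow> q t \<le> qq" and LT: "L \<le> T"
  shows "(\<Sum>t<L. Bf e q A T t) \<le> ((\<Sum>t<L. e t) + Bf e q A T L) / (1 - qq)"
proof -
  let ?B = "Bf e q A T"
  have nn: "\<And>t. ?B t \<ge> 0" by (rule Bf_nonneg[OF assms(1-3)])
  have "(\<Sum>t<L. ?B t) \<le> (\<Sum>t<L. e t + qq * ?B (Suc t))"
  proof (rule sum_mono)
    fix t assume "t \<in> {..<L}"
    hence tL: "t < L" and tT: "t < T" using LT by auto
    have "q t * ?B (Suc t) \<le> qq * ?B (Suc t)" using qL[OF tL] nn[of "Suc t"] by (simp add: mult_right_mono)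
    thus "?B t \<le> e t + qq * ?B (Suc t)" using Bf_lt[OF tT] by simp
  qed
  also have "\<dots> = (\<Sum>t<L. e t) + qq * (\<Sum>t<L. ?B (Suc t))"
    by (simp add: sum.distrib sum_distrib_left)
  also have "(\<Sum>t<L. ?B (Suc t)) = (\<Sum>t<L. ?B t) + ?B L - ?B 0"
  proof -
    have "(\<Sum>t<Suc L. ?B t) = ?B 0 + (\<Sum>t<L. ?B (Suc t))" by (rule sum.lessThan_Suc_shift)
    moreover have "(\<Sum>t<Suc L. ?B t) = (\<Sum>t<L. ?B t) + ?B L" by simp
    ultimately show ?thesis by simp
  qed
  finally have 1: "(\<Sum>t<L. ?B t) \<le> (\<Sum>t<L. e t) + qq * ((\<Sum>t<L. ?B t) + ?B L - ?B 0)" .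
  have "(1 - qq) * (\<Sum>t<L. ?B t) \<le> (\<Sum>t<L. e t) + ?B L"
  proof -
    have "qq * ((\<Sum>t<L. ?B t) + ?B L - ?B 0) \<le> qq * (\<Sum>t<L. ?B t) + ?B L"
    proof -
      have "qq * ((\<Sum>t<L. ?B t) + ?B L - ?B 0) \<le> qq * ((\<Sum>t<L. ?B t) + ?B L)"
        using q0 nn[of 0] by (simp add: mult_left_mono)
      also have "\<dots> = qq * (\<Sum>t<L. ?B t) + qq * ?B L" by (simp add: algebra_simps)
      also have "qq * ?B L \<le> ?B L" using qq q0 nn[of L] by (simp add: mult_left_le_one_le)
      finally show ?thesis by simp
    qed
    thus ?thesis using 1 by (simp add: algebra_simps)
  qed
  thus ?thesis using qq by (simp add: field_simps)
qed

lemma card_ge1_le_sum: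
  fixes f :: "nat \<Rightarrow> real"
  assumes "finite A" "\<And>t. f t \<ge> 0"
  shows "real (card {t\<in>A. f t \<ge> 1}) \<le> sum f A"
proof -
  have "real (card {t\<in>A. f t \<ge> 1}) = (\<Sum>t\<in>{t\<in>A. f t \<ge> 1}. 1)" by simp
  also have "\<dots> \<le> (\<Sum>t\<in>{t\<in>A. f t \<ge> 1}. f t)" by (rule sum_mono) auto
  also have "\<dots> \<le> sum f A" by (rule sum_mono2) (use assms in auto)
  finally show ?thesis .
qed

lemma pow_bernoulli:
  fixes x :: real
  assumes "0 \<le> x" "x \<le> 1"
  shows "(1 - x) ^ k \<le> 1 / (1 + real k * x)"
proof -
  have b: "1 + real k * x \<le> (1 + x) ^ k" using Bernoulli_inequality[of x k] assms by simp
  have "(1 - x) ^ k * (1 + x) ^ k = (1 - x^2) ^ k" by (simp add: power_mult_distrib[symmetric] power2_eq_square algebra_simps)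
  also have "\<dots> \<le> 1" using assms by (intro power_le_one) (auto simp: power_le_one)
  finally have 1: "(1 - x) ^ k * (1 + x) ^ k \<le> 1" .
  have pos: "1 + real k * x > 0" using assms by (simp add: add_pos_nonneg)
  have "(1 - x) ^ k * (1 + real k * x) \<le> (1 - x) ^ k * (1 + x) ^ k"
    using b assms by (intro mult_left_mono) auto
  hence "(1 - x) ^ k * (1 + real k * x) \<le> 1" using 1 by linarith
  thus ?thesis using pos by (simp add: field_simps)
qed

lemma sum_sub_le:
  fixes e :: "nat \<Rightarrow> real"
  assumes "\<And>t. e t \<ge> 0" "A \<subseteq> {..<T}"
  shows "sum e A \<le> (\<Sum>t<T. e t)"
  by (rule sum_mono2) (use assms in auto)

lemma core_count:
  assumes e0: "\<And>t. e t \<ge> 0" and q0: "\<And>t. q t \<ge> 0" and A0: "A \<ge> 0"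
    and qq: "0 \<le> qq" "qq < 1"
    and q1: "\<And>t. t < T \<Longrightarrow> q t \<le> 1" and q2: "\<And>t. t + 2 * w < T \<Longrightarrow> q t \<le> qq"
  shows "real (card {t\<in>{..<T - 5*w}. Bf e q A T t \<ge> 1})
      \<le> (2 * (\<Sum>t<T. e t) + qq ^ (3*w) * ((\<Sum>t<T. e t) + A)) / (1 - qq)"
proof -
  let ?E = "\<Sum>t<T. e t"
  let ?B = "Bf e q A T"
  have E0: "?E \<ge> 0" using e0 by (simp add: sum_nonneg)
  have rhs0: "(2 * ?E + qq ^ (3*w) * (?E + A)) / (1 - qq) \<ge> 0"
    using E0 A0 qq by (simp add: zero_le_power)
  show ?thesis
  proof (cases "5 * w \<le> T")
    case False
    hence "T - 5*w = 0" by simp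
    thus ?thesis using rhs0 by simp
  next
    case True
    define L where "L = T - 5*w"
    define P where "P = T - 2*w"
    have LP: "L \<le> P" "P \<le> T" "P - L = 3*w" using True unfolding L_def P_def by auto
    have qL: "\<And>t. t < L \<Longrightarrow> q t \<le> qq" using q2 True unfolding L_def by auto
    have qP: "\<And>t. t < P \<Longrightarrow> q t \<le> qq" using q2 True unfolding P_def by auto
    have "real (card {t\<in>{..<L}. ?B t \<ge> 1}) \<le> (\<Sum>t<L. ?B t)"
      by (rule card_ge1_le_sum) (auto intro: Bf_nonneg e0 q0 A0)
    also have "\<dots> \<le> ((\<Sum>t<L. e t) + ?B L) / (1 - qq)"
      by (rule Bf_total[OF e0 q0 A0 qq(2) qq(1) qL]) (use LP in auto)
    also have "\<dots> \<le> (2 * ?E + qq ^ (3*w) * (?E + A)) / (1 - qq)"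
    proof (rule divide_right_mono)
      show "0 \<le> 1 - qq" using qq by simp
      have s1: "(\<Sum>t<L. e t) \<le> ?E" by (rule sum_sub_le[OF e0]) (use LP in auto)
      have s2: "(\<Sum>s\<in>{L..<P}. e s) \<le> ?E" by (rule sum_sub_le[OF e0]) (use LP in auto)
      have s3: "(\<Sum>s\<in>{P..<T}. e s) \<le> ?E" by (rule sum_sub_le[OF e0]) auto
      have bL: "?B L \<le> (\<Sum>s\<in>{L..<P}. e s) + qq ^ (P - L) * ?B P"
        by (rule Bf_decay[OF e0 q0 A0 qq(1) _ qP LP(2) LP(1)]) (use qq in simp)
      have bP: "?B P \<le> (\<Sum>s\<in>{P..<T}. e s) + A"
        by (rule Bf_sum[OF e0 q0 A0 q1 LP(2)])
      have pw: "qq ^ (3*w) \<ge> 0" using qq by simp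
      have "qq ^ (P - L) * ?B P \<le> qq ^ (3*w) * (?E + A)"
        using LP(3) bP s3 pw by (simp add: mult_left_mono)
      thus "(\<Sum>t<L. e t) + ?B L \<le> 2 * ?E + qq ^ (3*w) * (?E + A)"
        using s1 s2 bL by linarith
    qed
    finally show ?thesis unfolding L_def .
  qed
qed

lemma pair_rec:
  assumes G: "is_graph n G" and H: "is_graph n H"
    and sG: "image_mset (iso_class (n - 1)) C \<subseteq># deck n G"
    and sH: "image_mset (iso_class (n - 1)) C \<subseteq># deck n H" and t: "t < n"
    and hG: "\<And>t. real (deg_count n G t) \<le> hh t" and hH: "\<And>t. real (deg_count n H t) \<le> hh t"
  shows "\<bar>(real (size C) - 1 - real t) * (real (deg_count n G t) - real (deg_count n H t))
          + (real t + 1) * (real (deg_count n G (Suc t)) - real (deg_count n H (Suc t)))\<bar>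
         \<le> 2 * (real n - real (size C)) * (hh t + hh (Suc t))"
proof -
  let ?s = "real (sum_mset (image_mset (phi (n-1) t) (image_mset (iso_class (n - 1)) C)))"
  let ?m = "real (size C)"
  have mn: "size C \<le> n"
  proof -
    have "size (image_mset (iso_class (n - 1)) C) \<le> size (deck n G)" by (rule size_mset_mono[OF sG])
    thus ?thesis unfolding deck_def by simp
  qed
  have k0: "real n - ?m \<ge> 0" using mn by simp
  have 1: "\<bar>?s - ((?m - 1 - real t) * real (deg_count n G t) + (real t + 1) * real (deg_count n G (t+1)))\<bar>
         \<le> (real n - ?m) * (real (deg_count n G t) + real (deg_count n G (t+1)))"
    by (rule main_identity[OF G sG t])
  have 2: "\<bar>?s - ((?m - 1 - real t) * real (deg_count n H t) + (real t + 1) * real (deg_count n H (t+1)))\<bar>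
         \<le> (real n - ?m) * (real (deg_count n H t) + real (deg_count n H (t+1)))"
    by (rule main_identity[OF H sH t])
  have 3: "(real n - ?m) * (real (deg_count n G t) + real (deg_count n G (t+1))) \<le> (real n - ?m) * (hh t + hh (Suc t))"
    using hG[of t] hG[of "Suc t"] k0 by (intro mult_left_mono) auto
  have 4: "(real n - ?m) * (real (deg_count n H t) + real (deg_count n H (t+1))) \<le> (real n - ?m) * (hh t + hh (Suc t))"
    using hH[of t] hH[of "Suc t"] k0 by (intro mult_left_mono) auto
  have e: "(?m - 1 - real t) * (real (deg_count n G t) - real (deg_count n H t))
          + (real t + 1) * (real (deg_count n G (Suc t)) - real (deg_count n H (Suc t)))
        = (?s - ((?m - 1 - real t) * real (deg_count n H t) + (real t + 1) * real (deg_count n H (t+1))))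
        - (?s - ((?m - 1 - real t) * real (deg_count n G t) + (real t + 1) * real (deg_count n G (t+1))))"
    by (simp add: right_diff_distrib)
  show ?thesis unfolding e using 1 2 3 4 by linarith
qed

lemma lower_dom:
  fixes D R :: "nat \<Rightarrow> real"
  assumes rec: "\<And>t. t < T0 \<Longrightarrow> \<bar>(real m - 1 - real t) * D t + (real t + 1) * D (Suc t)\<bar> \<le> R t"
    and T0: "2 * T0 + 1 \<le> m" and top: "\<bar>D T0\<bar> \<le> A" and R0: "\<And>t. R t \<ge> 0"
  shows "t \<le> T0 \<Longrightarrow> \<bar>D t\<bar> \<le> Bf (\<lambda>t. if t < T0 then R t / (real m - 1 - real t) else 0)
        (\<lambda>t. if t < T0 then (real t + 1) / (real m - 1 - real t) else 0) A T0 t"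
proof (rule Bf_dom)
  fix t
  show "0 \<le> (if t < T0 then R t / (real m - 1 - real t) else 0)"
    using R0[of t] T0 by (auto intro!: divide_nonneg_pos)
  show "0 \<le> (if t < T0 then (real t + 1) / (real m - 1 - real t) else 0)"
    using T0 by (auto intro!: divide_nonneg_pos)
next
  fix t assume tT: "t < T0"
  define a where "a = real m - 1 - real t"
  have a0: "a > 0" using tT T0 unfolding a_def by linarith
  have "a * \<bar>D t\<bar> = \<bar>a * D t\<bar>" using a0 by (simp add: abs_mult)
  also have "\<dots> \<le> \<bar>a * D t + (real t + 1) * D (Suc t)\<bar> + \<bar>(real t + 1) * D (Suc t)\<bar>" by linarith
  also have "\<dots> \<le> R t + (real t + 1) * \<bar>D (Suc t)\<bar>" using rec[OF tT] unfolding a_def by (simp add: abs_mult)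
  finally have "a * \<bar>D t\<bar> \<le> R t + (real t + 1) * \<bar>D (Suc t)\<bar>" .
  hence "\<bar>D t\<bar> \<le> R t / a + (real t + 1) / a * \<bar>D (Suc t)\<bar>" using a0 by (simp add: field_simps)
  thus "\<bar>D t\<bar> \<le> (if t < T0 then R t / (real m - 1 - real t) else 0) +
      (if t < T0 then (real t + 1) / (real m - 1 - real t) else 0) * \<bar>D (Suc t)\<bar>"
    using tT unfolding a_def by simp
qed (use top in auto)

lemma upper_dom:
  fixes D R :: "nat \<Rightarrow> real"
  assumes rec: "\<And>t. t + 1 < n \<Longrightarrow> \<bar>(real m - 1 - real t) * D t + (real t + 1) * D (Suc t)\<bar> \<le> R t"
    and mk: "m + k = n" and T1: "2 * T1 \<le> n" and n2: "n \<ge> 2"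
    and top: "\<bar>D (n - 1 - T1)\<bar> \<le> A" and R0: "\<And>t. R t \<ge> 0"
  shows "j \<le> T1 \<Longrightarrow> \<bar>D (n - 1 - j)\<bar> \<le> Bf (\<lambda>j. if j < T1 then R (n - 2 - j) / (real n - 1 - real j) else 0)
        (\<lambda>j. if j < T1 then \<bar>real j + 1 - real k\<bar> / (real n - 1 - real j) else 0) A T1 j"
proof (rule Bf_dom[where D = "\<lambda>j. D (n - 1 - j)"])
  fix j
  show "0 \<le> (if j < T1 then R (n - 2 - j) / (real n - 1 - real j) else 0)"
    using R0 T1 by (auto intro!: divide_nonneg_pos)
  show "0 \<le> (if j < T1 then \<bar>real j + 1 - real k\<bar> / (real n - 1 - real j) else 0)"
    using T1 by (auto intro!: divide_nonneg_pos)
next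
  fix j assume jT: "j < T1"
  define t where "t = n - 2 - j"
  have t1: "t + 1 < n" "real t = real n - 2 - real j" using jT T1 n2 unfolding t_def by auto
  have eq1: "n - 1 - j = Suc t" and eq2: "n - 1 - Suc j = t" using jT T1 n2 unfolding t_def by auto
  define a where "a = real n - 1 - real j"
  have a0: "a > 0" using jT T1 unfolding a_def by linarith
  have at: "real t + 1 = a" using t1 unfolding a_def by simp
  have bt: "real m - 1 - real t = real j + 1 - real k" using t1 mk by linarith
  have "a * \<bar>D (Suc t)\<bar> = \<bar>a * D (Suc t)\<bar>" using a0 by (simp add: abs_mult)
  also have "\<dots> \<le> \<bar>(real j + 1 - real k) * D t + a * D (Suc t)\<bar> + \<bar>(real j + 1 - real k) * D t\<bar>" by linarith
  also have "\<dots> \<le> R t + \<bar>real j + 1 - real k\<bar> * \<bar>D t\<bar>"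
  proof -
    have r: "\<bar>(real j + 1 - real k) * D t + a * D (Suc t)\<bar> \<le> R t"
      using rec[OF t1(1)] unfolding bt at .
    thus ?thesis by (simp add: abs_mult)
  qed
  finally have "a * \<bar>D (Suc t)\<bar> \<le> R t + \<bar>real j + 1 - real k\<bar> * \<bar>D t\<bar>" .
  hence "\<bar>D (Suc t)\<bar> \<le> R t / a + \<bar>real j + 1 - real k\<bar> / a * \<bar>D t\<bar>" using a0 by (simp add: field_simps)
  thus "\<bar>D (n - 1 - j)\<bar> \<le> (if j < T1 then R (n - 2 - j) / (real n - 1 - real j) else 0) +
      (if j < T1 then \<bar>real j + 1 - real k\<bar> / (real n - 1 - real j) else 0) * \<bar>D (n - 1 - Suc j)\<bar>"
    using jT unfolding a_def eq1 eq2 t_def by simp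
qed (use top in auto)

lemma sum_deg_count: "(\<Sum>t<M. deg_count p F t) \<le> p"
proof -
  have "(\<Sum>t<M. deg_count p F t) = card {x\<in>{0..<p}. degree F x < M}"
  proof (induction M)
    case 0 thus ?case by simp
  next
    case (Suc M)
    have "{x\<in>{0..<p}. degree F x < Suc M} = {x\<in>{0..<p}. degree F x < M} \<union> {x\<in>{0..<p}. degree F x = M}"
      by auto
    hence "card {x\<in>{0..<p}. degree F x < Suc M} = card {x\<in>{0..<p}. degree F x < M} + deg_count p F M"
      unfolding deg_count_def by (subst card_Un_disjoint[symmetric]) auto
    thus ?case using Suc by simp
  qed
  also have "\<dots> \<le> card {0..<p}" by (rule card_mono) auto
  also have "\<dots> = p" by simp
  finally show ?thesis .
qed

lemma sum_shift_le:
  fixes f :: "nat \<Rightarrow> real"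
  assumes "\<And>t. f t \<ge> 0"
  shows "(\<Sum>t<M. f (t - 1)) \<le> f 0 + (\<Sum>t<M. f t)"
proof (cases M)
  case 0 thus ?thesis using assms by simp
next
  case (Suc M')
  have "(\<Sum>t<M. f (t - 1)) = f 0 + (\<Sum>t<M'. f t)" unfolding Suc sum.lessThan_Suc_shift by simp
  also have "\<dots> \<le> f 0 + (\<Sum>t<M. f t)" unfolding Suc using assms by simp
  finally show ?thesis .
qed

lemma deg_count_le: "deg_count n G t \<le> n"
proof -
  have "deg_count n G t \<le> card {0..<n}" unfolding deg_count_def by (rule card_mono) auto
  thus ?thesis by simp
qed

lemma nat_eq_of_abs_lt1:
  fixes a b :: nat
  assumes "\<bar>real a - real b\<bar> < 1"
  shows "a = b"
  using assms by linarith

lemma qq_pow_bound: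
  fixes n w :: nat
  assumes "1 \<le> w" "w \<le> n"
  shows "(1 - real w / real n) ^ (3 * w) \<le> real n ^ 3 / real w ^ 6"
proof -
  have n0: "real n > 0" using assms by simp
  have x: "0 \<le> real w / real n" "real w / real n \<le> 1" using assms by auto
  have 1: "(1 - real w / real n) ^ w \<le> 1 / (1 + real w * (real w / real n))"
    by (rule pow_bernoulli[OF x])
  have "1 / (1 + real w * (real w / real n)) \<le> real n / real w ^ 2"
  proof -
    have "real w * (real w / real n) = real w ^ 2 / real n" by (simp add: power2_eq_square)
    moreover have "1 / (1 + real w ^ 2 / real n) \<le> 1 / (real w ^ 2 / real n)"
      using assms n0 by (intro divide_left_mono) (auto simp: add_pos_nonneg)
    ultimately show ?thesis using assms by simp
  qed
  with 1 have 2: "(1 - real w / real n) ^ w \<le> real n / real w ^ 2" by linarith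
  have nn: "0 \<le> (1 - real w / real n) ^ w" using x by simp
  have "(1 - real w / real n) ^ (3 * w) = ((1 - real w / real n) ^ w) ^ 3"
    by (simp add: power_mult[symmetric] mult.commute)
  also have "\<dots> \<le> (real n / real w ^ 2) ^ 3" by (rule power_mono[OF 2 nn])
  also have "\<dots> = real n ^ 3 / real w ^ 6" by (simp add: power_divide power_mult[symmetric])
  finally show ?thesis .
qed

lemma ratio_le:
  fixes a b n w :: real
  assumes "a > 0" "b \<ge> 0" "a \<le> n" "b + w \<le> a" "n > 0" "w \<ge> 0"
  shows "b / a \<le> 1 - w / n"
proof -
  have "a * w / n \<le> w" using assms by (simp add: mult_le_cancel_right1 divide_le_eq mult.commute mult_right_mono)
  hence "b \<le> a * (1 - w / n)" using assms by (simp add: algebra_simps)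
  thus ?thesis using assms by (simp add: divide_le_eq mult.commute)
qed

lemma final_num:
  fixes E P n w k :: real
  assumes "E \<ge> 0" "E \<le> 80 * k" "0 \<le> P" "P \<le> n ^ 3 / w ^ 6" "21 * n ^ 4 \<le> w ^ 6" "4 * k \<le> n"
    "w \<ge> 1" "w \<le> n"
  shows "(2 * E + P * (E + n)) / (1 - (1 - w / n)) \<le> (n / w) * (160 * k + 1)"
proof -
  have n0: "n > 0" using assms by simp
  have w6: "w ^ 6 > 0" using assms by simp
  have "P * (E + n) \<le> (n ^ 3 / w ^ 6) * (21 * n)"
    using assms by (intro mult_mono) auto
  also have "\<dots> = 21 * n ^ 4 / w ^ 6" by (simp add: power_numeral_reduce field_simps)
  also have "\<dots> \<le> 1" using assms w6 by (simp add: divide_le_eq)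
  finally have "P * (E + n) \<le> 1" .
  hence num: "2 * E + P * (E + n) \<le> 160 * k + 1" using assms by linarith
  have "1 - (1 - w / n) = w / n" by simp
  hence "(2 * E + P * (E + n)) / (1 - (1 - w / n)) = (2 * E + P * (E + n)) * (n / w)" by simp
  also have "\<dots> \<le> (160 * k + 1) * (n / w)" using num n0 assms by (intro mult_right_mono) auto
  finally show ?thesis by (simp add: mult.commute)
qed

lemma main_count:
  fixes n k w :: nat and CC :: "nat set set multiset"
  assumes sz: "size CC = n - k" and gr: "\<forall>F\<in>#CC. is_graph (n - 1) F"
    and k4: "4 * k \<le> n" and n4: "4 \<le> n" and w1: "1 \<le> w" and w8: "8 * w \<le> n"
    and w6: "21 * real n ^ 4 \<le> real w ^ 6"
  shows "\<exists>J \<subseteq> {0..<n}. real (card J) \<ge> real n - (10 * real w + real k + 2 + 2 * ((real n / real w) * (160 * real k + 1))) \<and>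
          (\<forall>G H. is_graph n G \<and> is_graph n H \<and>
                 image_mset (iso_class (n - 1)) CC \<subseteq># deck n G \<and>
                 image_mset (iso_class (n - 1)) CC \<subseteq># deck n H \<longrightarrow>
                 (\<forall>t\<in>J. deg_count n G t = deg_count n H t))"
proof -
  define m where "m = size CC"
  have mk: "m + k = n" using sz k4 by (simp add: m_def)
  have m3: "m \<ge> 3" using mk k4 n4 by linarith
  have ne: "\<exists>F. F \<in># CC" using m3 unfolding m_def by (metis multiset_nonemptyE not_numeral_le_zero size_empty)
  define F0 where "F0 = (SOME F. F \<in># CC)"
  have F0: "F0 \<in># CC" unfolding F0_def using someI_ex[OF ne] .
  have F0g: "is_graph (n-1) F0" using F0 gr by auto
  define c where "c t = real (deg_count (n-1) F0 t)" for t
  define hh where "hh t = 1 + c t + c (t - 1)" for t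
  define R where "R t = 2 * real k * (hh t + hh (Suc t))" for t
  define cons where "cons G \<longleftrightarrow> is_graph n G \<and> image_mset (iso_class (n - 1)) CC \<subseteq># deck n G" for G
  have c0: "\<And>t. c t \<ge> 0" unfolding c_def by simp
  have hh0: "\<And>t. hh t \<ge> 0" unfolding hh_def using c0 by (simp add: add_nonneg_nonneg)
  have R0: "\<And>t. R t \<ge> 0" unfolding R_def using hh0 by simp
  have hb: "real (deg_count n G t) \<le> hh t" if "cons G" for G t
  proof -
    have "deg_count n G t \<le> 1 + deg_count (n-1) F0 t + deg_count (n-1) F0 (t - 1)"
      using h_bound[OF _ _ F0 F0g] that unfolding cons_def by blast
    hence "real (deg_count n G t) \<le> real (1 + deg_count (n-1) F0 t + deg_count (n-1) F0 (t - 1))"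
      by (simp only: of_nat_le_iff)
    thus ?thesis unfolding hh_def c_def by simp
  qed
  define T0 where "T0 = (m - 1) div 2"
  define T1 where "T1 = n div 2"
  have T0m: "2 * T0 + 1 \<le> m" "m \<le> 2 * T0 + 2" using m3 unfolding T0_def by auto
  have T1n: "2 * T1 \<le> n" "n \<le> 2 * T1 + 1" unfolding T1_def by auto
  define eL where "eL = (\<lambda>t. if t < T0 then R t / (real m - 1 - real t) else 0)"
  define qL where "qL = (\<lambda>t. if t < T0 then (real t + 1) / (real m - 1 - real t) else 0)"
  define eU where "eU = (\<lambda>j. if j < T1 then R (n - 2 - j) / (real n - 1 - real j) else 0)"
  define qU where "qU = (\<lambda>j. if j < T1 then \<bar>real j + 1 - real k\<bar> / (real n - 1 - real j) else 0)"
  define BL where "BL = Bf eL qL (real n) T0"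
  define BU where "BU = Bf eU qU (real n) T1"
  define qq where "qq = 1 - real w / real n"
  define J where "J = {t\<in>{0..<n}. \<forall>G H. cons G \<and> cons H \<longrightarrow> deg_count n G t = deg_count n H t}"
  define Band where "Band = {T0 - 5*w..<n - (T1 - 5*w)}"
  define BadL where "BadL = {t\<in>{..<T0 - 5*w}. BL t \<ge> 1}"
  define BadU where "BadU = (\<lambda>j. n - 1 - j) ` {j\<in>{..<T1 - 5*w}. BU j \<ge> 1}"
  have key: "{0..<n} - J \<subseteq> Band \<union> BadL \<union> BadU"
  proof
    fix t assume tt: "t \<in> {0..<n} - J"
    show "t \<in> Band \<union> BadL \<union> BadU"
    proof (rule ccontr)
      assume nb: "t \<notin> Band \<union> BadL \<union> BadU"
      have tn: "t < n" using tt by auto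
      have "t \<in> J" unfolding J_def
      proof (intro CollectI conjI allI impI)
        show "t \<in> {0..<n}" using tn by simp
        fix G H assume GH: "cons G \<and> cons H"
        define D where "D s = real (deg_count n G s) - real (deg_count n H s)" for s
        have rec: "\<bar>(real m - 1 - real s) * D s + (real s + 1) * D (Suc s)\<bar> \<le> R s" if s: "s < n" for s
        proof -
          have G: "is_graph n G" "image_mset (iso_class (n - 1)) CC \<subseteq># deck n G"
            and H: "is_graph n H" "image_mset (iso_class (n - 1)) CC \<subseteq># deck n H"
            using GH unfolding cons_def by auto
          have hG: "\<And>t. real (deg_count n G t) \<le> hh t" using hb GH by blast
          have hH: "\<And>t. real (deg_count n H t) \<le> hh t" using hb GH by blast
          have "\<bar>(real (size CC) - 1 - real s) * (real (deg_count n G s) - real (deg_count n H s))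
            + (real s + 1) * (real (deg_count n G (Suc s)) - real (deg_count n H (Suc s)))\<bar>
            \<le> 2 * (real n - real (size CC)) * (hh s + hh (Suc s))"
            by (rule pair_rec[OF G(1) H(1) G(2) H(2) s hG hH])
          moreover have "2 * (real n - real (size CC)) * (hh s + hh (Suc s)) = R s"
          proof -
            have "real n = real (size CC) + real k" using mk unfolding m_def by linarith
            hence "real n - real (size CC) = real k" by simp
            thus ?thesis unfolding R_def by simp
          qed
          ultimately show ?thesis unfolding D_def m_def by simp
        qed
        have Dn: "\<bar>D s\<bar> \<le> real n" for s
          using deg_count_le[of n G s] deg_count_le[of n H s] unfolding D_def by linarith
        show "deg_count n G t = deg_count n H t"
        proof (cases "t < T0 - 5*w")
          case True
          have "\<not> BL t \<ge> 1" using nb True unfolding BadL_def by auto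
          moreover have "\<bar>D t\<bar> \<le> BL t" unfolding BL_def eL_def qL_def
          proof (rule lower_dom[OF _ T0m(1) Dn R0])
            show "\<And>s. s < T0 \<Longrightarrow> \<bar>(real m - 1 - real s) * D s + (real s + 1) * D (Suc s)\<bar> \<le> R s"
              using rec T0m mk by simp
            show "t \<le> T0" using True by simp
          qed
          ultimately have "\<bar>D t\<bar> < 1" by simp
          thus ?thesis unfolding D_def by (rule nat_eq_of_abs_lt1)
        next
          case False
          have tb: "t \<ge> n - (T1 - 5*w)" using nb False unfolding Band_def by auto
          define j where "j = n - 1 - t"
          have j: "j < T1 - 5*w" "n - 1 - j = t" using tb tn unfolding j_def by auto
          have "\<not> BU j \<ge> 1"
          proof
            assume "BU j \<ge> 1"
            hence "t \<in> BadU" unfolding BadU_def using j by (intro image_eqI[of _ _ j]) auto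
            thus False using nb by simp
          qed
          moreover have "\<bar>D (n - 1 - j)\<bar> \<le> BU j" unfolding BU_def eU_def qU_def
          proof (rule upper_dom[OF _ mk T1n(1) _ Dn R0])
            show "\<And>s. s + 1 < n \<Longrightarrow> \<bar>(real m - 1 - real s) * D s + (real s + 1) * D (Suc s)\<bar> \<le> R s"
              using rec by simp
            show "2 \<le> n" using n4 by simp
            show "j \<le> T1" using j by simp
          qed
          ultimately have "\<bar>D t\<bar> < 1" using j by simp
          thus ?thesis unfolding D_def by (rule nat_eq_of_abs_lt1)
        qed
      qed
      thus False using tt by simp
    qed
  qed
  have cBand: "real (card Band) \<le> 10 * real w + real k + 2"
  proof -
    have "card Band = (n - (T1 - 5*w)) - (T0 - 5*w)" unfolding Band_def by simp
    also have "\<dots> \<le> 10 * w + k + 2" using T0m T1n mk by arith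
    finally show ?thesis by (simp only: of_nat_le_iff[symmetric])
  qed
  have nr: "real n \<ge> 4" "real k * 4 \<le> real n" "real m = real n - real k" "real w \<ge> 1" "real w * 8 \<le> real n"
    using n4 k4 mk w1 w8 by linarith+
  have sc: "(\<Sum>t<M. c t) \<le> real n" for M
  proof -
    have "(\<Sum>t<M. c t) = real (\<Sum>t<M. deg_count (n-1) F0 t)" unfolding c_def by simp
    also have "\<dots> \<le> real (n - 1)" using sum_deg_count by (simp only: of_nat_le_iff)
    finally show ?thesis by simp
  qed
  have c0n: "c 0 \<le> real n" using sc[of 1] by simp
  have shh: "(\<Sum>t<Suc n. hh t) \<le> 5 * real n"
  proof -
    have "(\<Sum>t<Suc n. hh t) = real (Suc n) + (\<Sum>t<Suc n. c t) + (\<Sum>t<Suc n. c (t - 1))"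
      unfolding hh_def by (simp add: sum.distrib)
    also have "\<dots> \<le> real (Suc n) + real n + (c 0 + real n)"
      using sc[of "Suc n"] sum_shift_le[of c "Suc n", OF c0] by linarith
    finally show ?thesis using c0n nr by simp
  qed
  have sR: "(\<Sum>t<n. R t) \<le> 20 * real k * real n"
  proof -
    have a: "(\<Sum>t<n. hh t) \<le> (\<Sum>t<Suc n. hh t)" using hh0[of n] by simp
    have b: "(\<Sum>t<n. hh (Suc t)) \<le> (\<Sum>t<Suc n. hh t)"
      using hh0[of 0] sum.lessThan_Suc_shift[of hh n] by linarith
    have "(\<Sum>t<n. R t) = 2 * real k * ((\<Sum>t<n. hh t) + (\<Sum>t<n. hh (Suc t)))"
      unfolding R_def by (simp only: sum_distrib_left[symmetric] sum.distrib)
    also have "\<dots> \<le> 2 * real k * (5 * real n + 5 * real n)"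
      using a b shh by (intro mult_left_mono) auto
    finally show ?thesis by simp
  qed
  have qq01: "0 \<le> qq" "qq < 1" unfolding qq_def using nr by auto
  have qpow: "0 \<le> qq ^ (3*w)" "qq ^ (3*w) \<le> real n ^ 3 / real w ^ 6"
    using qq01 qq_pow_bound[OF w1] w8 unfolding qq_def by auto
  have cL: "real (card BadL) \<le> (real n / real w) * (160 * real k + 1)"
  proof -
    have e0: "eL t \<ge> 0" for t unfolding eL_def using R0[of t] T0m by (auto intro!: divide_nonneg_pos)
    have q0: "qL t \<ge> 0" for t unfolding qL_def using T0m by (auto intro!: divide_nonneg_pos)
    have q1: "qL t \<le> 1" if "t < T0" for t
    proof -
      have "real t + 1 \<le> real m - 1 - real t" "real m - 1 - real t > 0" using that T0m by linarith+
      thus ?thesis unfolding qL_def using that by simp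
    qed
    have q2: "qL t \<le> qq" if "t + 2 * w < T0" for t
    proof -
      have "(real t + 1) / (real m - 1 - real t) \<le> 1 - real w / real n"
        by (rule ratio_le) (use that T0m nr in linarith)+
      thus ?thesis unfolding qL_def qq_def using that by simp
    qed
    have E: "(\<Sum>t<T0. eL t) \<le> 80 * real k"
    proof -
      have "(\<Sum>t<T0. eL t) \<le> (\<Sum>t<T0. 4 / real n * R t)"
      proof (rule sum_mono)
        fix t assume "t \<in> {..<T0}"
        hence t: "t < T0" by simp
        have d: "real m - 1 - real t \<ge> real n / 4" using t T0m nr by linarith
        have "R t / (real m - 1 - real t) \<le> R t / (real n / 4)"
          by (rule divide_left_mono[OF d R0]) (use nr d in auto)
        thus "eL t \<le> 4 / real n * R t" unfolding eL_def using t by (simp add: mult.commute)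
      qed
      also have "\<dots> = 4 / real n * (\<Sum>t<T0. R t)" by (simp add: sum_distrib_left)
      also have "\<dots> \<le> 4 / real n * (\<Sum>t<n. R t)"
        using R0 T0m mk by (intro mult_left_mono sum_mono2) auto
      also have "\<dots> \<le> 4 / real n * (20 * real k * real n)" using sR nr by (intro mult_left_mono) auto
      also have "\<dots> = 80 * real k" using nr by simp
      finally show ?thesis .
    qed
    have E0: "(\<Sum>t<T0. eL t) \<ge> 0" using e0 by (simp add: sum_nonneg)
    have "real (card BadL) \<le> (2 * (\<Sum>t<T0. eL t) + qq ^ (3*w) * ((\<Sum>t<T0. eL t) + real n)) / (1 - qq)"
      unfolding BadL_def BL_def by (rule core_count[OF e0 q0 _ qq01 q1 q2]) simp
    also have "\<dots> \<le> (real n / real w) * (160 * real k + 1)" unfolding qq_def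
      by (rule final_num[OF E0 E qpow[unfolded qq_def] w6]) (use nr in auto)
    finally show ?thesis .
  qed
  have cU: "real (card BadU) \<le> (real n / real w) * (160 * real k + 1)"
  proof -
    have e0: "eU t \<ge> 0" for t unfolding eU_def using R0 T1n by (auto intro!: divide_nonneg_pos)
    have q0: "qU t \<ge> 0" for t unfolding qU_def using T1n by (auto intro!: divide_nonneg_pos)
    have q1: "qU t \<le> 1" if "t < T1" for t
    proof -
      have "\<bar>real t + 1 - real k\<bar> \<le> real n - 1 - real t" "real n - 1 - real t > 0" using that T1n nr by linarith+
      thus ?thesis unfolding qU_def using that by simp
    qed
    have q2: "qU t \<le> qq" if "t + 2 * w < T1" for t
    proof -
      have "\<bar>real t + 1 - real k\<bar> / (real n - 1 - real t) \<le> 1 - real w / real n"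
        by (rule ratio_le) (use that T1n nr in linarith)+
      thus ?thesis unfolding qU_def qq_def using that by simp
    qed
    have E: "(\<Sum>t<T1. eU t) \<le> 80 * real k"
    proof -
      have "(\<Sum>t<T1. eU t) \<le> (\<Sum>t<T1. 4 / real n * R (n - 2 - t))"
      proof (rule sum_mono)
        fix t assume "t \<in> {..<T1}"
        hence t: "t < T1" by simp
        have d: "real n - 1 - real t \<ge> real n / 4" using t T1n nr by linarith
        have "R (n - 2 - t) / (real n - 1 - real t) \<le> R (n - 2 - t) / (real n / 4)"
          by (rule divide_left_mono[OF d R0]) (use nr d in auto)
        thus "eU t \<le> 4 / real n * R (n - 2 - t)" unfolding eU_def using t by (simp add: mult.commute)
      qed
      also have "\<dots> = 4 / real n * (\<Sum>t<T1. R (n - 2 - t))" by (simp add: sum_distrib_left)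
      also have "(\<Sum>t<T1. R (n - 2 - t)) \<le> (\<Sum>t<n. R t)"
      proof -
        have inj: "inj_on (\<lambda>t. n - 2 - t) {..<T1}" unfolding inj_on_def using T1n n4 by auto
        have "(\<Sum>t<T1. R (n - 2 - t)) = sum R ((\<lambda>t. n - 2 - t) ` {..<T1})"
          using sum.reindex[OF inj, of R] by (simp add: o_def)
        also have "\<dots> \<le> (\<Sum>t<n. R t)" by (rule sum_mono2) (use R0 n4 in auto)
        finally show ?thesis .
      qed
      hence "4 / real n * (\<Sum>t<T1. R (n - 2 - t)) \<le> 4 / real n * (\<Sum>t<n. R t)"
        using nr by (intro mult_left_mono) auto
      also have "\<dots> \<le> 4 / real n * (20 * real k * real n)" using sR nr by (intro mult_left_mono) auto
      also have "\<dots> = 80 * real k" using nr by simp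
      finally show ?thesis .
    qed
    have E0: "(\<Sum>t<T1. eU t) \<ge> 0" using e0 by (simp add: sum_nonneg)
    have "real (card BadU) \<le> real (card {j\<in>{..<T1 - 5*w}. BU j \<ge> 1})"
      unfolding BadU_def by (simp only: of_nat_le_iff) (rule card_image_le, simp)
    also have "\<dots> \<le> (2 * (\<Sum>t<T1. eU t) + qq ^ (3*w) * ((\<Sum>t<T1. eU t) + real n)) / (1 - qq)"
      unfolding BU_def by (rule core_count[OF e0 q0 _ qq01 q1 q2]) simp
    also have "\<dots> \<le> (real n / real w) * (160 * real k + 1)" unfolding qq_def
      by (rule final_num[OF E0 E qpow[unfolded qq_def] w6]) (use nr in auto)
    finally show ?thesis .
  qed
  have JS: "J \<subseteq> {0..<n}" unfolding J_def by auto
  have "card ({0..<n} - J) \<le> card (Band \<union> BadL \<union> BadU)"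
    by (rule card_mono[OF _ key]) (auto simp: Band_def BadL_def BadU_def)
  also have "\<dots> \<le> card Band + card BadL + card BadU"
    by (metis add_le_mono card_Un_le le_trans order_refl)
  finally have 1: "card ({0..<n} - J) \<le> card Band + card BadL + card BadU" .
  have "card ({0..<n} - J) = n - card J" using JS by (simp add: card_Diff_subset finite_subset)
  hence "real n - real (card J) \<le> real (card Band) + real (card BadL) + real (card BadU)"
    using 1 JS card_mono[OF _ JS] by linarith
  hence "real (card J) \<ge> real n - (10 * real w + real k + 2 + 2 * ((real n / real w) * (160 * real k + 1)))"
    using cBand cL cU by linarith
  moreover have "\<forall>G H. is_graph n G \<and> is_graph n H \<and>
                 image_mset (iso_class (n - 1)) CC \<subseteq># deck n G \<and>
                 image_mset (iso_class (n - 1)) CC \<subseteq># deck n H \<longrightarrow>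
                 (\<forall>t\<in>J. deg_count n G t = deg_count n H t)"
    unfolding J_def cons_def by auto
  ultimately show ?thesis using JS by blast
qed

lemma lin_aux:
  fixes a b z P Q :: real
  assumes "a \<le> 20 * P" "b \<le> Q" "z \<le> 160 * Q + P" "1 \<le> P"
  shows "a + b + 2 + 2 * z \<le> 20 * P + Q + 2 * P + 2 * (160 * Q + P)"
  using assms by (simp add: algebra_simps)

theorem lemma6:
  fixes \<beta> C :: real
  assumes "0 \<le> \<beta>" and "\<beta> < 1" and "C > 0"
  shows "\<exists>c>0. \<exists>N::nat. \<forall>n\<ge>N. \<forall>k::nat. real k \<le> C * real n powr \<beta> \<longrightarrow>
    (\<forall>\<C> :: nat set set multiset.
       size \<C> = n - k \<and> (\<forall>F\<in>#\<C>. is_graph (n - 1) F) \<longrightarrow>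
       (\<exists>J \<subseteq> {0..<n}. real (card J) \<ge> real n - c * real n powr (3/4 + \<beta>/4) \<and>
          (\<forall>G H. is_graph n G \<and> is_graph n H \<and>
                 image_mset (iso_class (n - 1)) \<C> \<subseteq># deck n G \<and>
                 image_mset (iso_class (n - 1)) \<C> \<subseteq># deck n H \<longrightarrow>
                 (\<forall>t\<in>J. deg_count n G t = deg_count n H t))))"
proof -
  define g where "g = 3/4 + \<beta>/4"
  define K where "K = 100 + 4 * C"
  define c where "c = 124 + 321 * C"
  have g: "3/4 \<le> g" "g < 1" "\<beta> \<le> g" "1 - g \<le> 1/4" "1 - g + \<beta> \<le> g" "1 - g \<le> g"
    using assms unfolding g_def by auto
  have c0: "c > 0" "K \<le> c" unfolding c_def K_def using assms by auto
  have main: "\<exists>J \<subseteq> {0..<n}. real (card J) \<ge> real n - c * real n powr g \<and>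
          (\<forall>G H. is_graph n G \<and> is_graph n H \<and>
                 image_mset (iso_class (n - 1)) CC \<subseteq># deck n G \<and>
                 image_mset (iso_class (n - 1)) CC \<subseteq># deck n H \<longrightarrow>
                 (\<forall>t\<in>J. deg_count n G t = deg_count n H t))"
    if n1: "n \<ge> 1" and hk: "real k \<le> C * real n powr \<beta>"
      and sz: "size CC = n - k" and gr: "\<forall>F\<in>#CC. is_graph (n - 1) F" for n k CC
  proof -
    define x where "x = real n"
    have x1: "x \<ge> 1" unfolding x_def using n1 by simp
    have xg1: "x powr g \<ge> 1" using x1 g by (intro ge_one_powr_ge_zero) auto
    have xsplit: "x = x powr (1 - g) * x powr g"
      using x1 by (simp add: powr_add[symmetric])
    show ?thesis
    proof (cases "x powr (1 - g) < K")
      case True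
      have "x powr (1 - g) * x powr g < K * x powr g"
        by (rule mult_strict_right_mono[OF True]) (use xg1 in linarith)
      hence "x < K * x powr g" using xsplit by simp
      also have "\<dots> \<le> c * x powr g" using c0 xg1 by (intro mult_right_mono) auto
      finally have "real (card ({}::nat set)) \<ge> real n - c * real n powr g" unfolding x_def by simp
      thus ?thesis by blast
    next
      case False
      hence big: "x powr (1 - g) \<ge> K" by simp
      have xK: "x \<ge> 100"
      proof -
        have "x powr (1 - g) \<le> x powr 1" using x1 g by (intro powr_mono) auto
        thus ?thesis using big x1 unfolding K_def using assms by simp
      qed
      have k4: "4 * k \<le> n"
      proof -
        have "x powr (1 - \<beta>) \<ge> x powr (1 - g)" using x1 g by (intro powr_mono) auto
        hence e1: "x powr (1 - \<beta>) \<ge> 4 * C" using big unfolding K_def using assms by simp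
        have "x = x powr (1 - \<beta>) * x powr \<beta>" using x1 by (simp add: powr_add[symmetric])
        also have "\<dots> \<ge> 4 * C * x powr \<beta>" using e1 by (intro mult_right_mono) auto
        finally have "4 * real k \<le> x" using hk unfolding x_def by linarith
        thus ?thesis unfolding x_def by linarith
      qed
      define w where "w = nat \<lceil>x powr g\<rceil>"
      have wr: "real w \<ge> x powr g" "real w \<le> x powr g + 1" unfolding w_def using xg1
        by (auto simp: of_nat_nat)
      have "real w \<ge> 1" using wr(1) xg1 by (rule order_trans[rotated])
      hence w1: "1 \<le> w" by simp
      have w8: "8 * w \<le> n"
      proof -
        have K100: "100 \<le> K" unfolding K_def using assms by simp
        have "100 * x powr g \<le> x powr (1 - g) * x powr g"
          by (rule mult_right_mono) (use big K100 xg1 in linarith)+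
        hence "x \<ge> 100 * x powr g" using xsplit by simp
        hence "8 * real w \<le> x" using wr xg1 by linarith
        thus ?thesis unfolding x_def by linarith
      qed
      have w6: "21 * real n ^ 4 \<le> real w ^ 6"
      proof -
        have a: "x powr (3/4) \<le> real w" using wr x1 g by (meson order_trans powr_mono)
        have "(x powr (3/4)) ^ 6 \<le> real w ^ 6" using a by (intro power_mono) auto
        moreover have "(x powr (3/4)) ^ 6 = x ^ 4 * x powr (1/2)"
        proof -
          have "(x powr (3/4)) ^ 6 = x powr (real 6 * (3/4))" using x1 by (intro powr_power) auto
          also have "\<dots> = x powr (real 4 + 1/2)" by simp
          also have "\<dots> = x powr (real 4) * x powr (1/2)" by (rule powr_add)
          also have "\<dots> = x ^ 4 * x powr (1/2)" using x1 by (subst powr_realpow) auto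
          finally show ?thesis .
        qed
        moreover have "x powr (1/2) \<ge> 21"
        proof -
          have "x powr (1 - g) \<le> x powr (1/2)" using x1 g by (intro powr_mono) auto
          thus ?thesis using big unfolding K_def using assms by simp
        qed
        moreover have "x ^ 4 \<ge> 0" using x1 by simp
        ultimately have "21 * x ^ 4 \<le> real w ^ 6"
        proof -
          assume h: "(x powr (3/4)) ^ 6 \<le> real w ^ 6" "(x powr (3/4)) ^ 6 = x ^ 4 * x powr (1/2)"
            "x powr (1/2) \<ge> 21" "x ^ 4 \<ge> 0"
          have "x ^ 4 * 21 \<le> x ^ 4 * x powr (1/2)" by (rule mult_left_mono) (use h in auto)
          thus ?thesis using h by simp
        qed
        thus ?thesis unfolding x_def .
      qed
      obtain J where J: "J \<subseteq> {0..<n}"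
        "real (card J) \<ge> real n - (10 * real w + real k + 2 + 2 * ((real n / real w) * (160 * real k + 1)))"
        "\<forall>G H. is_graph n G \<and> is_graph n H \<and>
                 image_mset (iso_class (n - 1)) CC \<subseteq># deck n G \<and>
                 image_mset (iso_class (n - 1)) CC \<subseteq># deck n H \<longrightarrow>
                 (\<forall>t\<in>J. deg_count n G t = deg_count n H t)"
        using main_count[OF sz gr k4 _ w1 w8 w6] xK unfolding x_def by auto
      have bound: "10 * real w + real k + 2 + 2 * ((real n / real w) * (160 * real k + 1)) \<le> c * x powr g"
      proof -
        have b1: "10 * real w \<le> 20 * x powr g" using wr xg1 by linarith
        have xb: "x powr \<beta> \<le> x powr g" using x1 g by (intro powr_mono) auto
        have b2: "real k \<le> C * x powr g"
        proof -
          have "C * x powr \<beta> \<le> C * x powr g" using xb assms by (intro mult_left_mono) auto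
          thus ?thesis using hk unfolding x_def by linarith
        qed
        have nw: "real n / real w \<le> x powr (1 - g)"
        proof -
          have "real n / real w \<le> x / x powr g" unfolding x_def using wr xg1 x1 unfolding x_def
            by (intro divide_left_mono) auto
          also have "\<dots> = x powr (1 - g)" using x1 by (simp add: powr_diff)
          finally show ?thesis .
        qed
        have "(real n / real w) * (160 * real k + 1) \<le> x powr (1 - g) * (160 * (C * x powr \<beta>) + 1)"
          using nw hk unfolding x_def by (intro mult_mono) auto
        also have "\<dots> = 160 * C * x powr (1 - g + \<beta>) + x powr (1 - g)"
          unfolding powr_add[of x "1 - g" \<beta>] by (simp add: algebra_simps)
        also have "\<dots> \<le> 160 * C * x powr g + x powr g"
        proof -
          have "x powr (1 - g + \<beta>) \<le> x powr g" using x1 g by (intro powr_mono) auto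
          moreover have "x powr (1 - g) \<le> x powr g" using x1 g by (intro powr_mono) auto
          ultimately show ?thesis using assms by (smt (verit) mult_left_mono)
        qed
        finally have b3: "(real n / real w) * (160 * real k + 1) \<le> 160 * C * x powr g + x powr g" .
        have "10 * real w + real k + 2 + 2 * ((real n / real w) * (160 * real k + 1))
            \<le> 20 * x powr g + C * x powr g + 2 * x powr g + 2 * (160 * C * x powr g + x powr g)"
        proof -
          have e: "160 * C * x powr g = 160 * (C * x powr g)" by simp
          show ?thesis unfolding e by (rule lin_aux[OF b1 b2 b3[unfolded e] xg1])
        qed
        also have "\<dots> = (24 + 321 * C) * x powr g" by (simp add: algebra_simps)
        also have "\<dots> \<le> c * x powr g" unfolding c_def using xg1 by (intro mult_right_mono) auto
        finally show ?thesis .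
      qed
      show ?thesis using J bound unfolding x_def by (intro exI[of _ J]) auto
    qed
  qed
  show ?thesis
    apply (rule exI[of _ c], rule conjI[OF c0(1)], rule exI[of _ 1])
    using main unfolding g_def by blast
qed


end
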